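(* Let $G$ be a graph with no induced $P_7$, $C_4$, $C_6$ or $C_7$, let $H=(B_1,\dots,B_5)$ be a nice blowup of $C_5$ in $G$, and let $i\in\{1,\dots,5\}$. If $a-b-c$ is an induced path in $G[A_2(i)]$, then $N_{A'_3(j)}(a)\subseteq N_{A'_3(j)}(b)$ and $N_{A'_3(j)}(c)\subseteq N_{A'_3(j)}(b)$ for each $j\in\{i,i+1\}$.
   Context: Indices modulo $5$. A nice blowup of $C_5$ is a tuple $(B_1,\dots,B_5)$ of pairwise disjoint cliques such that every vertex of $B_j$ has a neighbor in $B_{j-1}$ and in $B_{j+1}$, $B_j$ is anticomplete to $B_{j+2}$, and there are no $a\in B_j$, distinct $b,c\in B_{j+1}$, $d\in B_{j+2}$ with $G[\{a,b,c,d\}]\cong P_4$; $V(H)=\bigcup B_j$. For $v\notin V(H)$, $\operatorname{supp}(v)$ is the set of $j$ such that $v$ has a neighbor in $B_j$. $A_2(i)=\{v\notin V(H):\operatorname{supp}(v)=\{i,i+1\}\}$, $A_3(j)=\{v\notin V(H):\operatorname{supp}(v)=\{j-1,j,j+1\}\}$, $A'_3(j)=A_3(j)\cup B_j$; $N_S(v)$ denotes the neighbors of $v$ in $S$. *)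

theory Defs
  imports Main
begin

definition graph :: "'a set \<Rightarrow> ('a \<Rightarrow> 'a \<Rightarrow> bool) \<Rightarrow> bool" where
  "graph V E \<longleftrightarrow> finite V \<and> (\<forall>x y. E x y \<longrightarrow> x \<in> V \<and> y \<in> V)
     \<and> (\<forall>x y. E x y \<longrightarrow> E y x) \<and> (\<forall>x. \<not> E x x)"

definition induced_path :: "'a set \<Rightarrow> ('a \<Rightarrow> 'a \<Rightarrow> bool) \<Rightarrow> 'a list \<Rightarrow> bool" where
  "induced_path V E vs \<longleftrightarrow> distinct vs \<and> set vs \<subseteq> V \<and>
     (\<forall>i<length vs. \<forall>j<length vs. E (vs!i) (vs!j) \<longleftrightarrow> (i = j + 1 \<or> j = i + 1))"

definition induced_cycle :: "'a set \<Rightarrow> ('a \<Rightarrow> 'a \<Rightarrow> bool) \<Rightarrow> 'a list \<Rightarrow> bool" where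
  "induced_cycle V E vs \<longleftrightarrow> distinct vs \<and> set vs \<subseteq> V \<and>
     (\<forall>i<length vs. \<forall>j<length vs. E (vs!i) (vs!j) \<longleftrightarrow>
        (i = (j + 1) mod length vs \<or> j = (i + 1) mod length vs) \<and> i \<noteq> j)"

definition has_induced_P :: "'a set \<Rightarrow> ('a \<Rightarrow> 'a \<Rightarrow> bool) \<Rightarrow> nat \<Rightarrow> bool" where
  "has_induced_P V E n \<longleftrightarrow> (\<exists>vs. length vs = n \<and> induced_path V E vs)"

definition has_induced_C :: "'a set \<Rightarrow> ('a \<Rightarrow> 'a \<Rightarrow> bool) \<Rightarrow> nat \<Rightarrow> bool" where
  "has_induced_C V E n \<longleftrightarrow> (\<exists>vs. length vs = n \<and> induced_cycle V E vs)"

definition clique :: "('a \<Rightarrow> 'a \<Rightarrow> bool) \<Rightarrow> 'a set \<Rightarrow> bool" where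
  "clique E S \<longleftrightarrow> (\<forall>x\<in>S. \<forall>y\<in>S. x \<noteq> y \<longrightarrow> E x y)"

definition anticomplete :: "('a \<Rightarrow> 'a \<Rightarrow> bool) \<Rightarrow> 'a set \<Rightarrow> 'a set \<Rightarrow> bool" where
  "anticomplete E S T \<longleftrightarrow> (\<forall>x\<in>S. \<forall>y\<in>T. \<not> E x y)"

text \<open>Blowup of C_5 indexed by 0..4, indices taken mod 5 (B j means B (j mod 5)).
  G[{a,b,c,d}] isomorphic to P_4: some ordering of these four vertices is an induced path.\<close>
definition nice_blowup_C5 :: "'a set \<Rightarrow> ('a \<Rightarrow> 'a \<Rightarrow> bool) \<Rightarrow> (nat \<Rightarrow> 'a set) \<Rightarrow> bool" where
  "nice_blowup_C5 V E B \<longleftrightarrow>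
     (\<forall>j. B j = B (j mod 5)) \<and>
     (\<forall>j<5. B j \<subseteq> V \<and> clique E (B j)) \<and>
     (\<forall>j<5. \<forall>k<5. j \<noteq> k \<longrightarrow> B j \<inter> B k = {}) \<and>
     (\<forall>j<5. \<forall>v\<in>B j. (\<exists>u\<in>B (j + 4). E v u) \<and> (\<exists>u\<in>B (j + 1). E v u)) \<and>
     (\<forall>j<5. anticomplete E (B j) (B (j + 2))) \<and>
     (\<forall>j<5. \<not> (\<exists>a\<in>B j. \<exists>b\<in>B (j + 1). \<exists>c\<in>B (j + 1). \<exists>d\<in>B (j + 2). b \<noteq> c \<and>
          (\<exists>vs. set vs = {a, b, c, d} \<and> length vs = 4 \<and> induced_path V E vs)))"

definition blowup_vertices :: "(nat \<Rightarrow> 'a set) \<Rightarrow> 'a set" where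
  "blowup_vertices B = (\<Union>j<5. B j)"

definition supp :: "('a \<Rightarrow> 'a \<Rightarrow> bool) \<Rightarrow> (nat \<Rightarrow> 'a set) \<Rightarrow> 'a \<Rightarrow> nat set" where
  "supp E B v = {j. j < 5 \<and> (\<exists>u\<in>B j. E v u)}"

definition A2 :: "'a set \<Rightarrow> ('a \<Rightarrow> 'a \<Rightarrow> bool) \<Rightarrow> (nat \<Rightarrow> 'a set) \<Rightarrow> nat \<Rightarrow> 'a set" where
  "A2 V E B i = {v \<in> V - blowup_vertices B. supp E B v = {i mod 5, (i + 1) mod 5}}"

definition A3 :: "'a set \<Rightarrow> ('a \<Rightarrow> 'a \<Rightarrow> bool) \<Rightarrow> (nat \<Rightarrow> 'a set) \<Rightarrow> nat \<Rightarrow> 'a set" where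
  "A3 V E B j = {v \<in> V - blowup_vertices B.
      supp E B v = {(j + 4) mod 5, j mod 5, (j + 1) mod 5}}"

definition A3' :: "'a set \<Rightarrow> ('a \<Rightarrow> 'a \<Rightarrow> bool) \<Rightarrow> (nat \<Rightarrow> 'a set) \<Rightarrow> nat \<Rightarrow> 'a set" where
  "A3' V E B j = A3 V E B j \<union> B j"

definition nbhd_in :: "('a \<Rightarrow> 'a \<Rightarrow> bool) \<Rightarrow> 'a set \<Rightarrow> 'a \<Rightarrow> 'a set" where
  "nbhd_in E S v = {u \<in> S. E v u}"

end

theory Submission
  imports Defs
begin

lemma Bmod: "nice_blowup_C5 V E B \<Longrightarrow> B k = B (k mod 5)"
  unfolding nice_blowup_C5_def by blast

lemma Bcong: "nice_blowup_C5 V E B \<Longrightarrow> k mod 5 = l mod 5 \<Longrightarrow> B k = B l"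
  by (metis Bmod)

lemma Bsub: "nice_blowup_C5 V E B \<Longrightarrow> B k \<subseteq> V"
proof -
  assume N: "nice_blowup_C5 V E B"
  have "k mod 5 < 5" by simp
  thus ?thesis using N Bmod[OF N, of k] unfolding nice_blowup_C5_def by metis
qed

lemma nonsupp:
  assumes N: "nice_blowup_C5 V E B" and s: "supp E B v = S" and u: "u \<in> B k"
    and k: "k mod 5 \<notin> S"
  shows "\<not> E v u"
proof
  assume "E v u"
  moreover have "u \<in> B (k mod 5)" using u Bmod[OF N, of k] by simp
  ultimately have "k mod 5 \<in> supp E B v" unfolding supp_def by auto
  thus False using s k by simp
qed

lemma insupp:
  assumes N: "nice_blowup_C5 V E B" and s: "k mod 5 \<in> supp E B v"
  shows "\<exists>u\<in>B k. E v u"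
  using s Bmod[OF N, of k] unfolding supp_def by auto

lemma nbr:
  assumes N: "nice_blowup_C5 V E B" and p: "p \<in> B k"
  shows "(\<exists>u\<in>B (k+4). E p u) \<and> (\<exists>u\<in>B (k+1). E p u)"
proof -
  have p': "p \<in> B (k mod 5)" using p Bmod[OF N, of k] by simp
  have 1: "B (k mod 5 + 4) = B (k+4)" by (rule Bcong[OF N]) presburger
  have 2: "B (k mod 5 + 1) = B (k+1)" by (rule Bcong[OF N]) presburger
  show ?thesis using N p' 1 2 unfolding nice_blowup_C5_def
    by (metis mod_less_divisor zero_less_numeral)
qed

lemma anti:
  assumes G: "graph V E" and N: "nice_blowup_C5 V E B" and p: "p \<in> B k" and q: "q \<in> B l"
    and kl: "l mod 5 = (k+2) mod 5 \<or> k mod 5 = (l+2) mod 5"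
  shows "\<not> E p q"
proof -
  have symm: "\<And>x y. E x y \<Longrightarrow> E y x" using G unfolding graph_def by blast
  have A: "\<not> E p q" if p: "p \<in> B k" and q: "q \<in> B l" and kl: "l mod 5 = (k+2) mod 5" for p q k l
  proof -
    have p': "p \<in> B (k mod 5)" using p Bmod[OF N, of k] by simp
    have "B l = B (k mod 5 + 2)" using kl by (intro Bcong[OF N]) presburger
    hence "q \<in> B (k mod 5 + 2)" using q by simp
    thus ?thesis using p' N unfolding nice_blowup_C5_def anticomplete_def
      by (meson mod_less_divisor zero_less_numeral)
  qed
  show ?thesis using kl A[OF p q] A[OF q p] symm by blast
qed

lemma P7:
  assumes G: "graph V E" and S: "{t,v,w,x,a,b,c} \<subseteq> V"
    and "E t v" "E v w" "E w x" "E x a" "E a b" "E b c"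
    and "\<not> E t w" "\<not> E t x" "\<not> E t a" "\<not> E t b" "\<not> E t c"
    "\<not> E v x" "\<not> E v a" "\<not> E v b" "\<not> E v c"
    "\<not> E w a" "\<not> E w b" "\<not> E w c" "\<not> E x b" "\<not> E x c" "\<not> E a c"
  shows "has_induced_P V E 7"
proof -
  have symm: "\<And>x y. E x y \<Longrightarrow> E y x" and irr: "\<And>x. \<not> E x x" using G unfolding graph_def by blast+
  have Esym: "\<And>p q. E p q = E q p" using symm by blast
  have d: "distinct [t,v,w,x,a,b,c]" using assms symm irr by auto
  have "induced_path V E [t,v,w,x,a,b,c]"
    unfolding induced_path_def
    apply (intro conjI)
    using d apply simp
    using S apply simp
    using assms irr Esym by (simp add: less_Suc_eq numeral_eq_Suc all_conj_distrib Esym)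
  thus ?thesis unfolding has_induced_P_def by (intro exI[of _ "[t,v,w,x,a,b,c]"]) simp
qed

lemma all4: "(\<forall>i<length [p,q,r,s]. P i) \<longleftrightarrow> P 0 \<and> P 1 \<and> P 2 \<and> P 3"
  by (auto simp: less_Suc_eq numeral_eq_Suc)

lemma C4:
  assumes G: "graph V E" and S: "{a,b,c,x} \<subseteq> V"
    and "E a b" "E b c" "E c x" "E x a" "\<not> E a c" "\<not> E b x" "a \<noteq> c" "b \<noteq> x"
  shows "has_induced_C V E 4"
proof -
  have symm: "\<And>x y. E x y \<Longrightarrow> E y x" and irr: "\<And>x. \<not> E x x" using G unfolding graph_def by blast+
  have Esym: "\<And>p q. E p q = E q p" using symm by blast
  have d: "distinct [a,b,c,x]" using assms symm irr by auto
  have "induced_cycle V E [a,b,c,x]"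
    unfolding induced_cycle_def
    apply (intro conjI)
    using d apply simp
    using S apply simp
    apply (simp only: all4)
    using assms irr Esym by (simp add: Esym)
  thus ?thesis unfolding has_induced_C_def by (intro exI[of _ "[a,b,c,x]"]) simp
qed

lemma core:
  assumes G: "graph V E" and noP7: "\<not> has_induced_P V E 7" and noC4: "\<not> has_induced_C V E 4"
    and N: "nice_blowup_C5 V E B"
    and a: "a \<in> A2 V E B i" and b: "b \<in> A2 V E B i" and c: "c \<in> A2 V E B i"
    and ab: "E a b" and bc: "E b c" and ac: "\<not> E a c" and acd: "a \<noteq> c" and i5: "i < 5"
    and j: "j \<in> {i, i+1}" and x: "x \<in> A3' V E B j" and ax: "E a x" and bx: "\<not> E b x"
  shows False
proof -
  have symm: "\<And>x y. E x y \<Longrightarrow> E y x" using G unfolding graph_def by blast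
  have sa: "supp E B a = {i mod 5, (i + 1) mod 5}" using a unfolding A2_def by auto
  have sb: "supp E B b = {i mod 5, (i + 1) mod 5}" using b unfolding A2_def by auto
  have sc: "supp E B c = {i mod 5, (i + 1) mod 5}" using c unfolding A2_def by auto
  have abcV: "a \<in> V" "b \<in> V" "c \<in> V" using a b c unfolding A2_def by auto
  have xV: "x \<in> V" using x Bsub[OF N, of j] unfolding A3'_def A3_def by auto
  have off: "\<not> E p u" if "p \<in> {a,b,c}" "u \<in> B k" "k mod 5 \<noteq> i mod 5" "k mod 5 \<noteq> (i+1) mod 5" for p u k
  proof -
    have "k mod 5 \<notin> {i mod 5, (i + 1) mod 5}" using that(3,4) by simp
    thus ?thesis using that(1) nonsupp[OF N sa that(2)] nonsupp[OF N sb that(2)] nonsupp[OF N sc that(2)] by blast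
  qed
  have icases: "i = 0 \<or> i = 1 \<or> i = 2 \<or> i = 3 \<or> i = 4" using i5 by auto
  obtain d :: nat where dj: "(d = 4 \<and> j = i) \<or> (d = 1 \<and> j = i + 1)" using j by auto
  have nbrd: "\<exists>u\<in>B (k+d). E p u" if "p \<in> B k" for p k
    using nbr[OF N that] dj icases by (elim disjE) auto
  have xcases: "x \<in> B j \<or> (x \<notin> blowup_vertices B \<and> supp E B x = {(j + 4) mod 5, j mod 5, (j + 1) mod 5})"
    using x unfolding A3'_def A3_def by auto
  have "\<exists>w\<in>B (j+d). E x w"
  proof (cases "x \<in> B j")
    case True thus ?thesis using nbrd by blast
  next
    case False
    hence "supp E B x = {(j + 4) mod 5, j mod 5, (j + 1) mod 5}" using xcases by blast
    moreover have "(j+d) mod 5 \<in> {(j + 4) mod 5, j mod 5, (j + 1) mod 5}" using dj icases by (elim disjE) auto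
    ultimately show ?thesis using insupp[OF N] by metis
  qed
  then obtain w where w: "w \<in> B (j+d)" "E x w" by blast
  obtain v where v: "v \<in> B (j+d+d)" "E w v" using nbrd[OF w(1)] by blast
  obtain t where t: "t \<in> B (j+d+d+d)" "E v t" using nbrd[OF v(1)] by blast
  have xnb: "\<not> E x u" if "u \<in> B k" "k = j+d+d \<or> k = j+d+d+d" for u k
  proof (cases "x \<in> B j")
    case True
    have "k mod 5 = (j + 2) mod 5 \<or> j mod 5 = (k + 2) mod 5" using that(2) dj icases by (elim disjE) auto
    thus ?thesis using anti[OF G N True that(1)] by blast
  next
    case False
    hence s: "supp E B x = {(j + 4) mod 5, j mod 5, (j + 1) mod 5}" using xcases by blast
    have "k mod 5 \<notin> {(j + 4) mod 5, j mod 5, (j + 1) mod 5}" using that(2) dj icases by (elim disjE) auto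
    thus ?thesis using nonsupp[OF N s that(1)] by blast
  qed
  have xv: "\<not> E x v" using xnb v(1) by blast
  have xt: "\<not> E x t" using xnb t(1) by blast
  have "(j+d) mod 5 = (j+d+d+d + 2) mod 5 \<or> (j+d+d+d) mod 5 = (j+d + 2) mod 5" using dj icases by (elim disjE) auto
  hence tw: "\<not> E t w" using anti[OF G N t(1) w(1)] by blast
  have offw: "\<not> E p w" if "p \<in> {a,b,c}" for p using off[OF that w(1)] dj icases by (elim disjE) auto
  have offv: "\<not> E p v" if "p \<in> {a,b,c}" for p using off[OF that v(1)] dj icases by (elim disjE) auto
  have offt: "\<not> E p t" if "p \<in> {a,b,c}" for p using off[OF that t(1)] dj icases by (elim disjE) auto
  have "b \<noteq> x" using offw w(2) by blast
  have xc: "\<not> E c x"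
    using C4[OF G _ ab bc _ _ ac bx acd \<open>b \<noteq> x\<close>] noC4 abcV xV symm[OF ax] by blast
  have wvtV: "w \<in> V" "v \<in> V" "t \<in> V" using w(1) v(1) t(1) Bsub[OF N] by blast+
  have "has_induced_P V E 7"
    apply (rule P7[OF G, of t v w x a b c])
    using abcV xV wvtV apply blast
    using symm t(2) v(2) w(2) ax ab bc tw xt offt offv offw xv bx xc ac by blast+
  thus False using noP7 by blast
qed

theorem lemma7p3:
  fixes V :: "'a set" and E :: "'a \<Rightarrow> 'a \<Rightarrow> bool" and B :: "nat \<Rightarrow> 'a set"
    and i :: nat and a b c :: 'a
  assumes "graph V E"
    and "\<not> has_induced_P V E 7"
    and "\<not> has_induced_C V E 4"
    and "\<not> has_induced_C V E 6"
    and "\<not> has_induced_C V E 7"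
    and "nice_blowup_C5 V E B"
    and "i < 5"
    and "a \<in> A2 V E B i" and "b \<in> A2 V E B i" and "c \<in> A2 V E B i"
    and "induced_path V E [a, b, c]"
  shows "\<forall>j \<in> {i, i + 1}.
           nbhd_in E (A3' V E B j) a \<subseteq> nbhd_in E (A3' V E B j) b \<and>
           nbhd_in E (A3' V E B j) c \<subseteq> nbhd_in E (A3' V E B j) b"
proof -
  have symm: "\<And>x y. E x y \<Longrightarrow> E y x" using assms(1) unfolding graph_def by blast
  have P: "E a b" "E b c" "\<not> E a c" "a \<noteq> c"
  proof -
    have H: "\<forall>p<3. \<forall>q<3. E ([a,b,c]!p) ([a,b,c]!q) \<longleftrightarrow> (p = q + 1 \<or> q = p + 1)"
      and D: "distinct [a,b,c]" using assms(11) unfolding induced_path_def by auto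
    show "E a b" using H[rule_format, of 0 1] by simp
    show "E b c" using H[rule_format, of 1 2] by simp
    show "\<not> E a c" using H[rule_format, of 0 2] by simp
    show "a \<noteq> c" using D by simp
  qed
  show ?thesis
  proof (intro ballI conjI subsetI)
    fix j u assume j: "j \<in> {i, i+1}"
    { assume u: "u \<in> nbhd_in E (A3' V E B j) a"
      show "u \<in> nbhd_in E (A3' V E B j) b"
      proof (rule ccontr)
        assume "u \<notin> nbhd_in E (A3' V E B j) b"
        thus False using core[OF assms(1,2,3,6,8,9,10) P assms(7) j, of u] u
          unfolding nbhd_in_def by blast
      qed }
    { assume u: "u \<in> nbhd_in E (A3' V E B j) c"
      show "u \<in> nbhd_in E (A3' V E B j) b"
      proof (rule ccontr)
        assume "u \<notin> nbhd_in E (A3' V E B j) b"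
        thus False using core[OF assms(1,2,3,6,10,9,8) symm[OF P(2)] symm[OF P(1)] _ _ assms(7) j, of u] u P(3,4) symm
          unfolding nbhd_in_def by blast
      qed }
  qed
qed

end
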